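(* Let $d$ be an extended $K$-quasi-metric on $X$ with point at infinity $\infty$, let $o\in X\setminus\{\infty\}$ and let $d'=d_o$ be the involution of $d$ at $o$. Fix $\epsilon>0$. Then for every $\delta<\epsilon/K^2$ and every $\delta$-covering $\{B_{d,r_i}(x_i)\}_i$ of $X\setminus\{\infty\}$, some subfamily of $\{B_{d',K^3r_i/\epsilon^2}(x_i)\}_i$ is a $\frac{K^3}{\epsilon^2}\delta$-covering of $X\setminus(\{\infty\}\cup B_{d,\epsilon}(o))$.
   Context: A $K$-quasi-metric ($K\ge1$) is a symmetric map $d:X\times X\to[0,\infty)$ with $d(x,y)=0\iff x=y$ and $d(x,y)\le K\max(d(x,z),d(z,y))$; it is extended with point at infinity $\infty\in X$ if $d(x,\infty)=\infty$ for $x\neq\infty$ and all other distances are finite (with the same axioms). The involution at $o\ne\infty$: $d_o(x,x)=0$, $d_o(x,y)=\frac{d(x,y)}{d(x,o)d(o,y)}$ for distinct $x,y\ne\infty$, $d_o(\infty,y)=1/d(o,y)$, $d_o(x,\infty)=1/d(x,o)$ for distinct points, with $\lambda/0=\infty$ for $\lambda>0$. For a distance $\rho$ on $X$, $B_{\rho,r}(x)=\{y\in X:\rho(x,y)\le r\}$ is the closed ball. A $\delta$-covering of a set $A$ with respect to $\rho$ is a family of closed $\rho$-balls $B_{\rho,r_i}(x_i)$ with $r_i\le\delta$ whose union contains $A$. *)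

theory Defs
  imports "HOL-Analysis.Analysis"
begin

text \<open>Distances take values in [0,\<infinity>] (type ennreal); in ennreal, x / 0 = \<infinity> for x > 0.\<close>

definition quasi_metric :: "real \<Rightarrow> 'a set \<Rightarrow> ('a \<Rightarrow> 'a \<Rightarrow> ennreal) \<Rightarrow> bool" where
  "quasi_metric K X d \<longleftrightarrow> K \<ge> 1 \<and>
     (\<forall>x\<in>X. \<forall>y\<in>X. d x y = d y x) \<and>
     (\<forall>x\<in>X. \<forall>y\<in>X. d x y = 0 \<longleftrightarrow> x = y) \<and>
     (\<forall>x\<in>X. \<forall>y\<in>X. \<forall>z\<in>X. d x y \<le> ennreal K * max (d x z) (d z y))"

definition ext_quasi_metric :: "real \<Rightarrow> 'a set \<Rightarrow> ('a \<Rightarrow> 'a \<Rightarrow> ennreal) \<Rightarrow> 'a \<Rightarrow> bool" where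
  "ext_quasi_metric K X d pinf \<longleftrightarrow> quasi_metric K X d \<and> pinf \<in> X \<and>
     (\<forall>x\<in>X. x \<noteq> pinf \<longrightarrow> d x pinf = \<infinity>) \<and>
     (\<forall>x\<in>X - {pinf}. \<forall>y\<in>X - {pinf}. d x y < \<infinity>)"

definition involution :: "('a \<Rightarrow> 'a \<Rightarrow> ennreal) \<Rightarrow> 'a \<Rightarrow> 'a \<Rightarrow> 'a \<Rightarrow> 'a \<Rightarrow> ennreal" where
  "involution d pinf p0 x y =
     (if x = y then 0
      else if x = pinf then 1 / d p0 y
      else if y = pinf then 1 / d x p0
      else d x y / (d x p0 * d p0 y))"

definition cball_d :: "('a \<Rightarrow> 'a \<Rightarrow> ennreal) \<Rightarrow> 'a set \<Rightarrow> real \<Rightarrow> 'a \<Rightarrow> 'a set" where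
  "cball_d \<rho> X r x = {y\<in>X. 0 \<le> r \<and> \<rho> x y \<le> ennreal r}"

definition is_covering ::
  "('a \<Rightarrow> 'a \<Rightarrow> ennreal) \<Rightarrow> 'a set \<Rightarrow> real \<Rightarrow> 'a set \<Rightarrow> 'i set \<Rightarrow> ('i \<Rightarrow> 'a) \<Rightarrow> ('i \<Rightarrow> real) \<Rightarrow> bool" where
  "is_covering \<rho> X \<delta> A I c r \<longleftrightarrow>
     (\<forall>i\<in>I. c i \<in> X \<and> r i \<le> \<delta>) \<and> A \<subseteq> (\<Union>i\<in>I. cball_d \<rho> X (r i) (c i))"

end

theory Submission
  imports Defs
begin

lemma fin_real: "(x::ennreal) < \<infinity> \<Longrightarrow> x = ennreal (enn2real x)"
  by (simp add: less_top)

theorem lemma2p2: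
  fixes X :: "'a set" and d :: "'a \<Rightarrow> 'a \<Rightarrow> ennreal" and K \<epsilon> \<delta> :: real
    and pinf p0 :: 'a and I :: "'i set" and c :: "'i \<Rightarrow> 'a" and r :: "'i \<Rightarrow> real"
  assumes "ext_quasi_metric K X d pinf"
    and "p0 \<in> X" and "p0 \<noteq> pinf"
    and "\<epsilon> > 0"
    and "\<delta> < \<epsilon> / K^2"
    and "is_covering d X \<delta> (X - {pinf}) I c r"
  shows "\<exists>J\<subseteq>I. is_covering (involution d pinf p0) X (K^3 / \<epsilon>^2 * \<delta>)
            (X - ({pinf} \<union> cball_d d X \<epsilon> p0)) J c (\<lambda>i. K^3 * r i / \<epsilon>^2)"
proof (intro exI[of _ I] conjI subset_refl)
  note E = assms(1)[unfolded ext_quasi_metric_def quasi_metric_def]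
  note K1 = E[THEN conjunct1, THEN conjunct1]
  note symA = E[THEN conjunct1, THEN conjunct2, THEN conjunct1]
  note triA = E[THEN conjunct1, THEN conjunct2, THEN conjunct2, THEN conjunct2]
  note infA = E[THEN conjunct2, THEN conjunct2, THEN conjunct1]
  note finA = E[THEN conjunct2, THEN conjunct2, THEN conjunct2]
  have sym: "\<And>x y. x \<in> X \<Longrightarrow> y \<in> X \<Longrightarrow> d x y = d y x" using symA by blast
  have tri: "\<And>x y z. x \<in> X \<Longrightarrow> y \<in> X \<Longrightarrow> z \<in> X \<Longrightarrow> d x y \<le> ennreal K * max (d x z) (d z y)"
    using triA by blast
  have inf: "\<And>x. x \<in> X \<Longrightarrow> x \<noteq> pinf \<Longrightarrow> d x pinf = \<infinity>" using infA by blast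
  have fin: "\<And>x y. x \<in> X - {pinf} \<Longrightarrow> y \<in> X - {pinf} \<Longrightarrow> d x y < \<infinity>" using finA by blast
  note C = assms(6)[unfolded is_covering_def]
  have e2: "\<epsilon>^2 > 0" using assms(4) by simp
  show "is_covering (involution d pinf p0) X (K^3 / \<epsilon>^2 * \<delta>)
            (X - ({pinf} \<union> cball_d d X \<epsilon> p0)) I c (\<lambda>i. K^3 * r i / \<epsilon>^2)"
    unfolding is_covering_def
  proof (intro conjI ballI subsetI)
    fix i assume i: "i \<in> I"
    show "c i \<in> X" using C i by blast
    have "r i \<le> \<delta>" using C i by blast
    then have "K^3 * r i \<le> K^3 * \<delta>" using K1 by simp
    then show "K ^ 3 * r i / \<epsilon>\<^sup>2 \<le> K ^ 3 / \<epsilon>\<^sup>2 * \<delta>" using e2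
      by (simp add: divide_right_mono)
  next
    fix y assume y: "y \<in> X - ({pinf} \<union> cball_d d X \<epsilon> p0)"
    then have yX: "y \<in> X - {pinf}" by blast
    then obtain i where i: "i \<in> I" and yb: "y \<in> cball_d d X (r i) (c i)" using C by blast
    have cX: "c i \<in> X" using C i by blast
    have r0: "0 \<le> r i" and dcy: "d (c i) y \<le> ennreal (r i)" using yb by (auto simp: cball_d_def)
    have ri: "r i \<le> \<delta>" using C i by blast
    have cp: "c i \<noteq> pinf"
    proof
      assume "c i = pinf"
      then have "d (c i) y = \<infinity>" using sym[of pinf y] inf[of y] yX cX by auto
      with dcy show False by (simp add: top_unique)
    qed
    have "involution d pinf p0 (c i) y \<le> ennreal (K ^ 3 * r i / \<epsilon>\<^sup>2)"
    proof (cases "c i = y")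
      case True then show ?thesis by (simp add: involution_def)
    next
      case False
      have cX': "c i \<in> X - {pinf}" using cX cp by blast
      have pX: "p0 \<in> X - {pinf}" using assms(2,3) by blast
      define a where "a = enn2real (d (c i) y)"
      define b where "b = enn2real (d (c i) p0)"
      define e where "e = enn2real (d p0 y)"
      have ha: "d (c i) y = ennreal a" unfolding a_def using fin[OF cX' yX] fin_real by blast
      have hb: "d (c i) p0 = ennreal b" unfolding b_def using fin[OF cX' pX] fin_real by blast
      have hb': "d p0 (c i) = ennreal b" using hb sym[of p0 "c i"] cX assms(2) by simp
      have he: "d p0 y = ennreal e" unfolding e_def using fin[OF pX yX] fin_real by blast
      have a0: "a \<ge> 0" "b \<ge> 0" "e \<ge> 0" unfolding a_def b_def e_def by auto
      have ar: "a \<le> r i" using dcy ha r0 by simp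
      have ee: "e > \<epsilon>"
      proof -
        have "\<not> d p0 y \<le> ennreal \<epsilon>" using y assms(4) by (auto simp: cball_d_def)
        then have "\<not> e \<le> \<epsilon>" using he by (auto intro: ennreal_leI)
        then show ?thesis by simp
      qed
      have "d p0 y \<le> ennreal K * max (d p0 (c i)) (d (c i) y)"
        using tri[of p0 y "c i"] assms(2) yX cX by blast
      moreover have "max (d p0 (c i)) (d (c i) y) = ennreal (max b a)"
        using hb' ha a0 by (cases "b \<le> a") (auto simp: max_def ennreal_leI ennreal_le_iff)
      moreover have "ennreal K * ennreal (max b a) = ennreal (K * max b a)"
        using a0 K1 by (simp add: ennreal_mult)
      ultimately have "ennreal e \<le> ennreal (K * max b a)"
        using he by simp
      then have tr: "e \<le> K * max b a" using a0 K1
        by (subst (asm) ennreal_le_iff) auto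
      have "K^2 \<ge> K" using K1 by (simp add: power2_eq_square)
      have "K * a \<le> K * \<delta>" using ar ri K1 by simp
      also have "K * \<delta> < \<epsilon> / K"
      proof -
        have "\<delta> * K^2 < \<epsilon>" using assms(5) K1 by (simp add: pos_less_divide_eq)
        then show ?thesis using K1 by (simp add: pos_less_divide_eq power2_eq_square mult_ac)
      qed
      also have "\<epsilon> / K \<le> \<epsilon>" using K1 assms(4) by (simp add: divide_le_eq)
      finally have Ka: "K * a < \<epsilon>" .
      have bb: "K * b > \<epsilon>"
      proof (cases "b \<le> a")
        case True then have "e \<le> K * a" using tr by (simp add: max_def)
        then show ?thesis using Ka ee by simp
      next
        case False then have "e \<le> K * b" using tr by (simp add: max_def)
        then show ?thesis using ee by simp
      qed
      have bpos: "b > 0" using bb K1 assms(4)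
        using zero_less_mult_pos[of K b] by linarith
      have epos: "e > 0" using ee assms(4) by simp
      have inv: "involution d pinf p0 (c i) y = ennreal (a / (b * e))"
        using False cp yX ha hb he a0 bpos epos
        by (simp add: involution_def ennreal_mult'[symmetric] divide_ennreal)
      have "a / (b * e) \<le> K^3 * r i / \<epsilon>^2"
      proof -
        have "b * e \<ge> (\<epsilon> / K) * \<epsilon>"
        proof (rule mult_mono)
          show "\<epsilon> / K \<le> b" using bb K1 by (simp add: divide_le_eq mult.commute)
          show "\<epsilon> \<le> e" using ee by simp
        qed (use a0 assms(4) in auto)
        then have "a / (b * e) \<le> a / ((\<epsilon> / K) * \<epsilon>)"
        proof (rule divide_left_mono)
          have "0 < \<epsilon> / K * \<epsilon>" using assms(4) K1 by simp
          moreover have "0 < b * e" using bpos epos by simp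
          ultimately show "0 < b * e * (\<epsilon> / K * \<epsilon>)" by (metis mult_pos_pos)
        qed (use a0 in auto)
        also have "\<dots> = K * a / \<epsilon>^2" using K1 by (simp add: power2_eq_square)
        also have "\<dots> \<le> K^3 * r i / \<epsilon>^2"
        proof (rule divide_right_mono)
          have "K \<le> K^3" using K1
          proof -
            have "1 \<le> K^2" using K1 by (simp add: one_le_power)
            then have "K * 1 \<le> K * K^2" using K1 by (intro mult_left_mono) auto
            then show ?thesis by (simp add: power2_eq_square power3_eq_cube)
          qed
          have "K * a \<le> K * r i" using ar K1 by simp
          also have "\<dots> \<le> K^3 * r i" using \<open>K \<le> K^3\<close> r0 by (simp add: mult_right_mono)
          finally show "K * a \<le> K^3 * r i" .
        qed simp
        finally show ?thesis .
      qed
      then show ?thesis unfolding inv by (simp add: ennreal_leI)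
    qed
    moreover have "0 \<le> K ^ 3 * r i / \<epsilon>\<^sup>2" using K1 r0 by simp
    ultimately have "y \<in> cball_d (involution d pinf p0) X (K ^ 3 * r i / \<epsilon>\<^sup>2) (c i)"
      using yX by (simp add: cball_d_def)
    then show "y \<in> (\<Union>i\<in>I. cball_d (involution d pinf p0) X (K ^ 3 * r i / \<epsilon>\<^sup>2) (c i))"
      using i by blast
  qed
qed

end
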